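(* Let $N\ge1$, $H=(H_1,\dots,H_N)\in]0,1[^N$, $a\in\mathbb{R}^N\setminus\{(0,\dots,0)\}$, let $S^H(a)$ be the mixed sub-fractional Brownian motion with parameters $N,a,H$, and for $0\le u<v\le s<t$ let $C_{u,v,s,t}=\mathrm{Cov}\big(S^H_v(a)-S^H_u(a),\,S^H_t(a)-S^H_s(a)\big)$. Then for all $0\le u<v\le s<t$: (1) $C_{u,v,s,t}=0$ if $H_i=1/2$ for every $i\in\{1,\dots,N\}$; (2) $C_{u,v,s,t}>0$ if $H_i>1/2$ for every $i\in\{1,\dots,N\}$; (3) $C_{u,v,s,t}<0$ if $H_i<1/2$ for every $i\in\{1,\dots,N\}$.
   Context: Let $(\Omega,\mathcal F,\mathbb P)$ be a probability space. For $K\in]0,1[$, a fractional Brownian motion on $\mathbb{R}$ with Hurst index $K$ is a continuous centered Gaussian process $\{B^K(t),t\in\mathbb{R}\}$ with $\mathrm{Cov}(B^K(t),B^K(s))=\frac12(|t|^{2K}+|s|^{2K}-|t-s|^{2K})$. The sub-fractional Brownian motion (sfBm) of index $K$ is $\xi^K_t=(B^K_t+B^K_{-t})/\sqrt2$, $t\ge0$; it is a continuous centered Gaussian process with $\mathrm{Cov}(\xi^K_t,\xi^K_s)=s^{2K}+t^{2K}-\frac12\big((s+t)^{2K}+|t-s|^{2K}\big)$. For $N\ge1$, $H\in]0,1[^N$, $a\in\mathbb{R}^N\setminus\{0\}$, the mixed sub-fractional Brownian motion (msfBm) is $S^H_t(a)=\sum_{i=1}^N a_i\xi^{H_i}(t)$,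 $t\ge0$, where $\xi^{H_1},\dots,\xi^{H_N}$ are independent sfBms with indices $H_1,\dots,H_N$. *)

theory Defs
  imports "HOL-Probability.Probability"
begin

definition cov :: "'a measure \<Rightarrow> ('a \<Rightarrow> real) \<Rightarrow> ('a \<Rightarrow> real) \<Rightarrow> real" where
  "cov M X Y = (\<integral>\<omega>. (X \<omega> - (\<integral>\<eta>. X \<eta> \<partial>M)) * (Y \<omega> - (\<integral>\<eta>. Y \<eta> \<partial>M)) \<partial>M)"

definition gaussian_rv :: "'a measure \<Rightarrow> ('a \<Rightarrow> real) \<Rightarrow> bool" where
  "gaussian_rv M X \<longleftrightarrow>
     (\<exists>\<mu> \<sigma>. \<sigma> > 0 \<and> distributed M lborel X (normal_density \<mu> \<sigma>)) \<or>
     (\<exists>c. AE \<omega> in M. X \<omega> = c)"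

definition centered_gaussian_process ::
    "'a measure \<Rightarrow> real set \<Rightarrow> (real \<Rightarrow> 'a \<Rightarrow> real) \<Rightarrow> bool" where
  "centered_gaussian_process M T X \<longleftrightarrow>
     (\<forall>t\<in>T. X t \<in> borel_measurable M \<and> integrable M (\<lambda>\<omega>. (X t \<omega>)\<^sup>2) \<and>
             (\<integral>\<omega>. X t \<omega> \<partial>M) = 0) \<and>
     (\<forall>F c. finite F \<longrightarrow> F \<subseteq> T \<longrightarrow> gaussian_rv M (\<lambda>\<omega>. \<Sum>t\<in>F. c t * X t \<omega>)) \<and>
     (\<forall>\<omega>\<in>space M. continuous_on T (\<lambda>t. X t \<omega>))"

definition fbm :: "'a measure \<Rightarrow> real \<Rightarrow> (real \<Rightarrow> 'a \<Rightarrow> real) \<Rightarrow> bool" where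
  "fbm M K B \<longleftrightarrow> prob_space M \<and> 0 < K \<and> K < 1 \<and>
     centered_gaussian_process M UNIV B \<and>
     (\<forall>t s. cov M (B t) (B s) = (\<bar>t\<bar> powr (2*K) + \<bar>s\<bar> powr (2*K) - \<bar>t - s\<bar> powr (2*K)) / 2)"

definition sfbm :: "'a measure \<Rightarrow> real \<Rightarrow> (real \<Rightarrow> 'a \<Rightarrow> real) \<Rightarrow> bool" where
  "sfbm M K \<xi> \<longleftrightarrow> (\<exists>B. fbm M K B \<and>
     (\<forall>t\<ge>0. \<forall>\<omega>\<in>space M. \<xi> t \<omega> = (B t \<omega> + B (-t) \<omega>) / sqrt 2))"

definition msfbm :: "'a measure \<Rightarrow> nat \<Rightarrow> (nat \<Rightarrow> real) \<Rightarrow> (nat \<Rightarrow> real)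
     \<Rightarrow> (nat \<Rightarrow> real \<Rightarrow> 'a \<Rightarrow> real) \<Rightarrow> (real \<Rightarrow> 'a \<Rightarrow> real) \<Rightarrow> bool" where
  "msfbm M N a H \<xi> S \<longleftrightarrow> prob_space M \<and>
     (\<forall>i<N. sfbm M (H i) (\<xi> i)) \<and>
     prob_space.indep_vars M (\<lambda>_. Pi\<^sub>M {0..} (\<lambda>_. borel))
        (\<lambda>i \<omega>. restrict (\<lambda>t. \<xi> i t \<omega>) {0..}) {..<N} \<and>
     (\<forall>t\<ge>0. \<forall>\<omega>\<in>space M. S t \<omega> = (\<Sum>i<N. a i * \<xi> i t \<omega>))"

end

theory Submission
  imports Defs
begin


lemma phi_ineq:
  fixes c x s t :: real
  assumes c: "c > 0" "c \<noteq> 1" "c < 2" and x: "0 < x" "x < s" and st: "s < t"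
  shows "(c-1) * (((x+t) powr (c-1) - (x+s) powr (c-1)) - ((t-x) powr (c-1) - (s-x) powr (c-1))) < 0"
proof -
  define \<alpha> where "\<alpha> = c - 1"
  define \<phi> where "\<phi> y = (y+t) powr \<alpha> - (y+s) powr \<alpha>" for y
  define \<phi>' where "\<phi>' y = \<alpha> * (y+t) powr (\<alpha>-1) - \<alpha> * (y+s) powr (\<alpha>-1)" for y
  have der: "DERIV \<phi> y :> \<phi>' y" if "-x \<le> y" "y \<le> x" for y
  proof -
    have "y + s > 0" "y + t > 0" using that x st by auto
    then show ?thesis unfolding \<phi>_def \<phi>'_def
      by (auto intro!: derivative_eq_intros)
  qed
  obtain z where z: "-x < z" "z < x" "\<phi> x - \<phi> (-x) = (x - (-x)) * \<phi>' z"
    using MVT2[of "-x" x \<phi> \<phi>'] der x by auto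
  have zs: "0 < z + s" "z + s < z + t" using z x st by auto
  have "(z+t) powr (\<alpha>-1) < (z+s) powr (\<alpha>-1)"
    using powr_less_mono2_neg[of "\<alpha>-1" "z+s" "z+t"] zs c by (auto simp: \<alpha>_def)
  hence "(c-1) * \<phi>' z < 0"
    unfolding \<phi>'_def \<alpha>_def using c
    by (smt (verit, best) mult_less_cancel_left mult_pos_pos right_diff_distrib)
  moreover have eq: "(c-1) * (\<phi> x - \<phi> (-x)) = (2*x) * ((c-1) * \<phi>' z)" using z(3) by simp
  ultimately have "(c-1) * (\<phi> x - \<phi> (-x)) < 0" using x
    unfolding eq by (intro mult_pos_neg[of "2*x"]) auto
  thus ?thesis unfolding \<phi>_def \<alpha>_def by (simp add: algebra_simps)
qed

definition GG :: "real \<Rightarrow> real \<Rightarrow> real \<Rightarrow> real \<Rightarrow> real" where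
  "GG c s t x = (t-x) powr c - (s-x) powr c + (x+t) powr c - (x+s) powr c"

lemma key_ineq:
  fixes c u v s t :: real
  assumes c: "c > 0" "c \<noteq> 1" "c < 2" and o: "0 \<le> u" "u < v" "v \<le> s" "s < t"
  shows "(c-1) * (GG c s t u - GG c s t v) > 0"
proof -
  have cont: "continuous_on {u..v} (GG c s t)"
    unfolding GG_def using o c
    by (intro continuous_intros continuous_on_powr') (auto intro!: continuous_intros)
  have dif: "GG c s t differentiable (at x)" if "u < x" "x < v" for x
  proof -
    have "0 < s - x" "0 < t - x" "0 < x + s" "0 < x + t" using that o by auto
    then show ?thesis unfolding GG_def
      by (auto intro!: derivative_eq_intros simp: real_differentiable_def)
  qed
  obtain l z where z: "u < z" "z < v" "DERIV (GG c s t) z :> l" "GG c s t v - GG c s t u = (v - u) * l"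
    using MVT[OF o(2) cont dif] by blast
  have p: "0 < s - z" "0 < t - z" "0 < z + s" "0 < z + t" using z o by auto
  have "DERIV (GG c s t) z :> c * ((z+t) powr (c-1) - (z+s) powr (c-1) - ((t-z) powr (c-1) - (s-z) powr (c-1)))"
    unfolding GG_def using p
    by (auto intro!: derivative_eq_intros simp: algebra_simps)
  hence l: "l = c * ((z+t) powr (c-1) - (z+s) powr (c-1) - ((t-z) powr (c-1) - (s-z) powr (c-1)))"
    using z(3) DERIV_unique by blast
  have "(c-1) * l < 0"
    using phi_ineq[OF c, of z s t] z o c unfolding l
    by (simp add: mult.left_commute mult_pos_neg)
  hence "(v-u) * ((c-1) * l) < 0" using z o
    by (simp add: mult_pos_neg)
  moreover have eq: "(c-1) * (GG c s t v - GG c s t u) = (v-u) * ((c-1) * l)" using z(4) by simp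
  ultimately have "(c-1) * (GG c s t v - GG c s t u) < 0" unfolding eq by simp
  thus ?thesis by (simp add: algebra_simps)
qed

lemma GG_one:
  assumes "0 \<le> u" "u < v" "v \<le> s" "s < t"
  shows "GG 1 s t u - GG 1 s t v = 0"
  using assms unfolding GG_def by simp



definition L2 :: "'a measure \<Rightarrow> ('a \<Rightarrow> real) \<Rightarrow> bool" where
  "L2 M X \<longleftrightarrow> X \<in> borel_measurable M \<and> integrable M (\<lambda>\<omega>. (X \<omega>)\<^sup>2)"

lemma L2_mult_integrable:
  assumes "L2 M X" "L2 M Y"
  shows "integrable M (\<lambda>\<omega>. X \<omega> * Y \<omega>)"
proof (rule Bochner_Integration.integrable_bound)
  show "integrable M (\<lambda>\<omega>. (X \<omega>)\<^sup>2 + (Y \<omega>)\<^sup>2)" using assms unfolding L2_def by auto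
  show "(\<lambda>\<omega>. X \<omega> * Y \<omega>) \<in> borel_measurable M" using assms unfolding L2_def by auto
  show "AE x in M. norm (X x * Y x) \<le> norm ((X x)\<^sup>2 + (Y x)\<^sup>2)"
  proof (rule AE_I2)
    fix x
    have "\<bar>X x * Y x\<bar> \<le> (X x)\<^sup>2 + (Y x)\<^sup>2"
    proof -
      have "2 * \<bar>X x\<bar> * \<bar>Y x\<bar> \<le> \<bar>X x\<bar>\<^sup>2 + \<bar>Y x\<bar>\<^sup>2" by (rule sum_squares_bound)
      hence "2 * (\<bar>X x\<bar> * \<bar>Y x\<bar>) \<le> (X x)\<^sup>2 + (Y x)\<^sup>2" by (simp add: mult.assoc)
      moreover have "0 \<le> \<bar>X x\<bar> * \<bar>Y x\<bar>" by simp
      ultimately have "\<bar>X x\<bar> * \<bar>Y x\<bar> \<le> (X x)\<^sup>2 + (Y x)\<^sup>2" by linarith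
      thus ?thesis by (simp add: abs_mult)
    qed
    thus "norm (X x * Y x) \<le> norm ((X x)\<^sup>2 + (Y x)\<^sup>2)" by simp
  qed
qed

lemma L2_sq: "L2 M X \<Longrightarrow> integrable M (\<lambda>\<omega>. X \<omega> * X \<omega>)"
  using L2_mult_integrable by blast

lemma L2_add: assumes "L2 M X" "L2 M Y" shows "L2 M (\<lambda>\<omega>. X \<omega> + Y \<omega>)"
proof -
  have i: "integrable M (\<lambda>\<omega>. X \<omega> * Y \<omega>)" using L2_mult_integrable[OF assms] .
  have e: "(\<lambda>\<omega>. (X \<omega> + Y \<omega>)\<^sup>2) = (\<lambda>\<omega>. (X \<omega>)\<^sup>2 + ((Y \<omega>)\<^sup>2 + 2 * (X \<omega> * Y \<omega>)))"
    by (simp add: power2_eq_square algebra_simps)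
  show ?thesis using assms i unfolding L2_def e by auto
qed

lemma L2_scale: "L2 M X \<Longrightarrow> L2 M (\<lambda>\<omega>. c * X \<omega>)"
  unfolding L2_def by (auto simp: power_mult_distrib)

lemma L2_diff: "L2 M X \<Longrightarrow> L2 M Y \<Longrightarrow> L2 M (\<lambda>\<omega>. X \<omega> - Y \<omega>)"
  using L2_add[of M X "\<lambda>\<omega>. (-1) * Y \<omega>"] L2_scale[of M Y "-1"] by simp

lemma L2_divide: "L2 M X \<Longrightarrow> L2 M (\<lambda>\<omega>. X \<omega> / c)"
  using L2_scale[of M X "1/c"] by simp

lemma L2_cong: "L2 M X \<Longrightarrow> (\<And>\<omega>. \<omega> \<in> space M \<Longrightarrow> X \<omega> = Y \<omega>) \<Longrightarrow> L2 M Y"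
  unfolding L2_def
  by (metis (no_types, lifting) Bochner_Integration.integrable_cong measurable_cong)

lemma L2_sum: "finite I \<Longrightarrow> (\<And>i. i \<in> I \<Longrightarrow> L2 M (X i)) \<Longrightarrow> L2 M (\<lambda>\<omega>. \<Sum>i\<in>I. X i \<omega>)"
proof (induction I rule: finite_induct)
  case empty then show ?case by (simp add: L2_def)
next
  case (insert x F) then show ?case by (simp add: L2_add)
qed

lemma (in prob_space) L2_integrable: "L2 M X \<Longrightarrow> integrable M X"
  unfolding L2_def by (auto intro: square_integrable_imp_integrable)

lemma cov_zero_mean: "integral\<^sup>L M X = 0 \<Longrightarrow> integral\<^sup>L M Y = 0 \<Longrightarrow> cov M X Y = (\<integral>\<omega>. X \<omega> * Y \<omega> \<partial>M)"
  unfolding cov_def by simp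

lemma cov_cong: "(\<And>\<omega>. \<omega> \<in> space M \<Longrightarrow> X \<omega> = X' \<omega>) \<Longrightarrow> (\<And>\<omega>. \<omega> \<in> space M \<Longrightarrow> Y \<omega> = Y' \<omega>)
   \<Longrightarrow> cov M X Y = cov M X' Y'"
  unfolding cov_def
  by (smt (verit, best) Bochner_Integration.integral_cong)

lemma (in prob_space) L2_bilin:
  assumes "L2 M X1" "L2 M X2" "L2 M Y1" "L2 M Y2"
  shows "(\<integral>\<omega>. (X1 \<omega> - X2 \<omega>) * (Y1 \<omega> - Y2 \<omega>) \<partial>M) =
    (\<integral>\<omega>. X1 \<omega> * Y1 \<omega> \<partial>M) - (\<integral>\<omega>. X1 \<omega> * Y2 \<omega> \<partial>M) - (\<integral>\<omega>. X2 \<omega> * Y1 \<omega> \<partial>M) + (\<integral>\<omega>. X2 \<omega> * Y2 \<omega> \<partial>M)"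
proof -
  have i: "integrable M (\<lambda>\<omega>. X1 \<omega> * Y1 \<omega>)" "integrable M (\<lambda>\<omega>. X1 \<omega> * Y2 \<omega>)"
    "integrable M (\<lambda>\<omega>. X2 \<omega> * Y1 \<omega>)" "integrable M (\<lambda>\<omega>. X2 \<omega> * Y2 \<omega>)"
    using assms by (auto intro: L2_mult_integrable)
  have "(\<integral>\<omega>. (X1 \<omega> - X2 \<omega>) * (Y1 \<omega> - Y2 \<omega>) \<partial>M) =
     (\<integral>\<omega>. (X1 \<omega> * Y1 \<omega> - X1 \<omega> * Y2 \<omega>) - (X2 \<omega> * Y1 \<omega> - X2 \<omega> * Y2 \<omega>) \<partial>M)"
    by (simp add: algebra_simps)
  also have "\<dots> = (\<integral>\<omega>. X1 \<omega> * Y1 \<omega> - X1 \<omega> * Y2 \<omega> \<partial>M) - (\<integral>\<omega>. X2 \<omega> * Y1 \<omega> - X2 \<omega> * Y2 \<omega> \<partial>M)"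
    using i by (intro Bochner_Integration.integral_diff) auto
  also have "\<dots> = (\<integral>\<omega>. X1 \<omega> * Y1 \<omega> \<partial>M) - (\<integral>\<omega>. X1 \<omega> * Y2 \<omega> \<partial>M) - (\<integral>\<omega>. X2 \<omega> * Y1 \<omega> \<partial>M) + (\<integral>\<omega>. X2 \<omega> * Y2 \<omega> \<partial>M)"
    using i by (simp add: Bochner_Integration.integral_diff)
  finally show ?thesis .
qed

lemma fbm_facts:
  assumes "fbm M K B"
  shows "L2 M (B t)" "integral\<^sup>L M (B t) = 0"
    "(\<integral>\<omega>. B t \<omega> * B s \<omega> \<partial>M) = (\<bar>t\<bar> powr (2*K) + \<bar>s\<bar> powr (2*K) - \<bar>t - s\<bar> powr (2*K)) / 2"
proof -
  show L: "L2 M (B t)" "integral\<^sup>L M (B t) = 0"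
    using assms unfolding fbm_def centered_gaussian_process_def L2_def by auto
  have "integral\<^sup>L M (B s) = 0"
    using assms unfolding fbm_def centered_gaussian_process_def L2_def by auto
  then have "cov M (B t) (B s) = (\<integral>\<omega>. B t \<omega> * B s \<omega> \<partial>M)"
    using L by (simp add: cov_zero_mean)
  then show "(\<integral>\<omega>. B t \<omega> * B s \<omega> \<partial>M) = (\<bar>t\<bar> powr (2*K) + \<bar>s\<bar> powr (2*K) - \<bar>t - s\<bar> powr (2*K)) / 2"
    using assms unfolding fbm_def by metis
qed

definition RR :: "real \<Rightarrow> real \<Rightarrow> real \<Rightarrow> real" where
  "RR c t s = t powr c + s powr c - ((t+s) powr c + \<bar>t-s\<bar> powr c) / 2"

lemma sfbm_facts:
  assumes "sfbm M K \<xi>" and t: "t \<ge> 0" and s: "s \<ge> 0"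
  shows "L2 M (\<xi> t)" "integral\<^sup>L M (\<xi> t) = 0"
    "(\<integral>\<omega>. \<xi> t \<omega> * \<xi> s \<omega> \<partial>M) = RR (2*K) t s"
proof -
  obtain B where B: "fbm M K B" and xi: "\<And>t \<omega>. t \<ge> 0 \<Longrightarrow> \<omega> \<in> space M \<Longrightarrow> \<xi> t \<omega> = (B t \<omega> + B (-t) \<omega>) / sqrt 2"
    using assms(1) unfolding sfbm_def by blast
  interpret prob_space M using B unfolding fbm_def by auto
  have LB: "L2 M (B x)" "integral\<^sup>L M (B x) = 0" for x using fbm_facts[OF B] by auto
  have L: "L2 M (\<xi> x)" if "x \<ge> 0" for x
    by (rule L2_cong[OF L2_divide[OF L2_add[OF LB(1) LB(1)]]]) (use xi that in auto)
  show "L2 M (\<xi> t)" using L t .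
  have "integral\<^sup>L M (\<xi> t) = (\<integral>\<omega>. (B t \<omega> + B (-t) \<omega>) / sqrt 2 \<partial>M)"
    using xi t by (intro Bochner_Integration.integral_cong) auto
  also have "\<dots> = 0" using LB L2_integrable[OF LB(1)] by (simp add: L2_integrable)
  finally show "integral\<^sup>L M (\<xi> t) = 0" .
  have "(\<integral>\<omega>. \<xi> t \<omega> * \<xi> s \<omega> \<partial>M) =
    (\<integral>\<omega>. ((B t \<omega> * B s \<omega> + B t \<omega> * B (-s) \<omega>) + (B (-t) \<omega> * B s \<omega> + B (-t) \<omega> * B (-s) \<omega>)) / 2 \<partial>M)"
  proof (intro Bochner_Integration.integral_cong refl)
    fix \<omega> assume w: "\<omega> \<in> space M"
    have q: "(a / sqrt 2) * (b / sqrt 2) = a * b / 2" for a b :: real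
      by (simp add: field_simps)
    show "\<xi> t \<omega> * \<xi> s \<omega> = ((B t \<omega> * B s \<omega> + B t \<omega> * B (-s) \<omega>) + (B (-t) \<omega> * B s \<omega> + B (-t) \<omega> * B (-s) \<omega>)) / 2"
      unfolding xi[OF t w] xi[OF s w] q by (simp add: algebra_simps)
  qed
  also have "\<dots> = ((\<integral>\<omega>. B t \<omega> * B s \<omega> \<partial>M) + (\<integral>\<omega>. B t \<omega> * B (-s) \<omega> \<partial>M)
     + ((\<integral>\<omega>. B (-t) \<omega> * B s \<omega> \<partial>M) + (\<integral>\<omega>. B (-t) \<omega> * B (-s) \<omega> \<partial>M))) / 2"
    using LB by (simp add: L2_mult_integrable Bochner_Integration.integral_add)
  also have "\<dots> = RR (2*K) t s"
    unfolding fbm_facts(3)[OF B] RR_def using t s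
    by (simp add: abs_minus_commute field_simps)
  finally show "(\<integral>\<omega>. \<xi> t \<omega> * \<xi> s \<omega> \<partial>M) = RR (2*K) t s" .
qed



lemma RR_GG:
  assumes "0 \<le> u" "u < v" "v \<le> s" "s < t"
  shows "RR c v t - RR c v s - RR c u t + RR c u s = (GG c s t u - GG c s t v) / 2"
proof -
  have e: "\<bar>v - t\<bar> = t - v" "\<bar>v - s\<bar> = s - v" "\<bar>u - t\<bar> = t - u" "\<bar>u - s\<bar> = s - u"
    using assms by auto
  show ?thesis unfolding RR_def GG_def e by (simp add: algebra_simps add_divide_distrib diff_divide_distrib)
qed

lemma meas_diff: "0 \<le> (u::real) \<Longrightarrow> 0 \<le> v \<Longrightarrow> (\<lambda>f. f v - f u) \<in> borel_measurable (Pi\<^sub>M {0..} (\<lambda>_. borel::real measure))"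
  apply (rule borel_measurable_diff)
   apply (rule measurable_component_singleton[where M="\<lambda>_. borel", simplified]; simp)
  apply (rule measurable_component_singleton[where M="\<lambda>_. borel", simplified]; simp)
  done

theorem corollary7:
  fixes M :: "'a measure" and N :: nat and a H :: "nat \<Rightarrow> real"
    and \<xi> :: "nat \<Rightarrow> real \<Rightarrow> 'a \<Rightarrow> real" and S :: "real \<Rightarrow> 'a \<Rightarrow> real"
  assumes "N \<ge> 1"
    and "\<forall>i<N. 0 < H i \<and> H i < 1"
    and "\<exists>i<N. a i \<noteq> 0"
    and "msfbm M N a H \<xi> S"
  shows "\<forall>u v s t. 0 \<le> u \<and> u < v \<and> v \<le> s \<and> s < t \<longrightarrow>
     ((\<forall>i<N. H i = 1/2) \<longrightarrow> cov M (\<lambda>\<omega>. S v \<omega> - S u \<omega>) (\<lambda>\<omega>. S t \<omega> - S s \<omega>) = 0) \<and>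
     ((\<forall>i<N. H i > 1/2) \<longrightarrow> cov M (\<lambda>\<omega>. S v \<omega> - S u \<omega>) (\<lambda>\<omega>. S t \<omega> - S s \<omega>) > 0) \<and>
     ((\<forall>i<N. H i < 1/2) \<longrightarrow> cov M (\<lambda>\<omega>. S v \<omega> - S u \<omega>) (\<lambda>\<omega>. S t \<omega> - S s \<omega>) < 0)"
proof (intro allI impI)
  fix u v s t :: real
  assume o: "0 \<le> u \<and> u < v \<and> v \<le> s \<and> s < t"
  hence o1: "0 \<le> u" "u < v" "v \<le> s" "s < t" by auto
  have PS: "prob_space M" and sf: "\<And>i. i<N \<Longrightarrow> sfbm M (H i) (\<xi> i)"
    and ind: "prob_space.indep_vars M (\<lambda>_. Pi\<^sub>M {0..} (\<lambda>_. borel))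
        (\<lambda>i \<omega>. restrict (\<lambda>t. \<xi> i t \<omega>) {0..}) {..<N}"
    and Sdef: "\<And>t \<omega>. t \<ge> 0 \<Longrightarrow> \<omega> \<in> space M \<Longrightarrow> S t \<omega> = (\<Sum>i<N. a i * \<xi> i t \<omega>)"
    using assms(4) unfolding msfbm_def by auto
  interpret prob_space M by (rule PS)
  define X where "X i \<omega> = \<xi> i v \<omega> - \<xi> i u \<omega>" for i \<omega>
  define Y where "Y i \<omega> = \<xi> i t \<omega> - \<xi> i s \<omega>" for i \<omega>
  define g where "g i = (GG (2 * H i) s t u - GG (2 * H i) s t v) / 2" for i
  have LX: "L2 M (X i)" "integral\<^sup>L M (X i) = 0" if "i < N" for i
  proof -
    note f = sfbm_facts[OF sf[OF that]]
    show "L2 M (X i)" unfolding X_def using f o1 by (intro L2_diff) auto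
    show "integral\<^sup>L M (X i) = 0" unfolding X_def using f o1
      by (subst Bochner_Integration.integral_diff) (auto intro: L2_integrable)
  qed
  have LY: "L2 M (Y i)" "integral\<^sup>L M (Y i) = 0" if "i < N" for i
  proof -
    note f = sfbm_facts[OF sf[OF that]]
    show "L2 M (Y i)" unfolding Y_def using f o1 by (intro L2_diff) auto
    show "integral\<^sup>L M (Y i) = 0" unfolding Y_def using f o1
      by (subst Bochner_Integration.integral_diff) (auto intro: L2_integrable)
  qed
  have XY: "(\<integral>\<omega>. X i \<omega> * Y i \<omega> \<partial>M) = g i" if "i < N" for i
  proof -
    note f = sfbm_facts[OF sf[OF that]]
    have "(\<integral>\<omega>. X i \<omega> * Y i \<omega> \<partial>M) =
      RR (2 * H i) v t - RR (2 * H i) v s - RR (2 * H i) u t + RR (2 * H i) u s"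
      unfolding X_def Y_def using o1
      by (subst L2_bilin) (auto simp: f)
    then show ?thesis unfolding g_def using RR_GG[OF o1] by simp
  qed
  have XY0: "(\<integral>\<omega>. X i \<omega> * Y j \<omega> \<partial>M) = 0" if ij: "i < N" "j < N" "i \<noteq> j" for i j
  proof -
    have ind2: "indep_vars (\<lambda>_. borel) (\<lambda>k \<omega>. (\<lambda>f. if k = i then f v - f u else f t - f s) (restrict (\<lambda>t. \<xi> k t \<omega>) {0..})) {..<N}"
    proof (rule indep_vars_compose2[OF ind])
      fix k
      show "(\<lambda>f::real\<Rightarrow>real. if k = i then f v - f u else f t - f s) \<in> measurable (Pi\<^sub>M {0..} (\<lambda>_. borel::real measure)) (borel::real measure)"
        using o1 meas_diff[of u v] meas_diff[of s t] by (cases "k = i") auto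
    qed
    define Z where "Z k \<omega> = (if k = i then X k \<omega> else Y k \<omega>)" for k \<omega>
    have "(\<lambda>k \<omega>. (\<lambda>f. if k = i then f v - f u else f t - f s) (restrict (\<lambda>t. \<xi> k t \<omega>) {0..})) = Z"
      using o1 by (auto simp: fun_eq_iff Z_def X_def Y_def)
    with ind2 have "indep_vars (\<lambda>_. borel) Z {..<N}" by simp
    hence indZ: "indep_vars (\<lambda>_. borel) Z {i, j}" by (rule indep_vars_subset) (use ij in auto)
    have ZXY: "Z i = X i" "Z j = Y j" using ij by (auto simp: fun_eq_iff Z_def)
    have intZ: "integrable M (Z k)" if "k \<in> {i, j}" for k
      using that ij LX LY ZXY by (auto intro: L2_integrable)
    have "(\<integral>\<omega>. (\<Prod>k\<in>{i,j}. Z k \<omega>) \<partial>M) = (\<Prod>k\<in>{i,j}. integral\<^sup>L M (Z k))"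
      by (rule indep_vars_lebesgue_integral[OF _ indZ intZ]) auto
    moreover have "(\<Prod>k\<in>{i,j}. Z k \<omega>) = X i \<omega> * Y j \<omega>" for \<omega>
      using ij by (simp add: Z_def)
    moreover have "(\<Prod>k\<in>{i,j}. integral\<^sup>L M (Z k)) = 0"
      using ij LX ZXY by simp
    ultimately show ?thesis by simp
  qed
  have covS: "cov M (\<lambda>\<omega>. S v \<omega> - S u \<omega>) (\<lambda>\<omega>. S t \<omega> - S s \<omega>) = (\<Sum>i<N. (a i)\<^sup>2 * g i)"
  proof -
    have "cov M (\<lambda>\<omega>. S v \<omega> - S u \<omega>) (\<lambda>\<omega>. S t \<omega> - S s \<omega>) =
       cov M (\<lambda>\<omega>. \<Sum>i<N. a i * X i \<omega>) (\<lambda>\<omega>. \<Sum>i<N. a i * Y i \<omega>)"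
      using o1 by (intro cov_cong) (auto simp: Sdef X_def Y_def sum_subtractf[symmetric] algebra_simps)
    also have "\<dots> = (\<integral>\<omega>. (\<Sum>i<N. a i * X i \<omega>) * (\<Sum>j<N. a j * Y j \<omega>) \<partial>M)"
    proof (rule cov_zero_mean)
      show "(\<integral>\<omega>. (\<Sum>i<N. a i * X i \<omega>) \<partial>M) = 0"
        using LX by (subst Bochner_Integration.integral_sum) (auto intro: L2_integrable)
      show "(\<integral>\<omega>. (\<Sum>i<N. a i * Y i \<omega>) \<partial>M) = 0"
        using LY by (subst Bochner_Integration.integral_sum) (auto intro: L2_integrable)
    qed
    also have "\<dots> = (\<integral>\<omega>. (\<Sum>i<N. \<Sum>j<N. (a i * a j) * (X i \<omega> * Y j \<omega>)) \<partial>M)"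
      by (simp add: sum_product algebra_simps)
    also have "\<dots> = (\<Sum>i<N. \<Sum>j<N. (a i * a j) * (\<integral>\<omega>. X i \<omega> * Y j \<omega> \<partial>M))"
    proof -
      have I: "integrable M (\<lambda>\<omega>. X i \<omega> * Y j \<omega>)" if "i < N" "j < N" for i j
        using LX LY L2_mult_integrable that by blast
      have I2: "integrable M (\<lambda>\<omega>. \<Sum>j<N. a i * a j * (X i \<omega> * Y j \<omega>))" if "i < N" for i
        using I that by (intro Bochner_Integration.integrable_sum) auto
      have "(\<integral>\<omega>. (\<Sum>j<N. a i * a j * (X i \<omega> * Y j \<omega>)) \<partial>M) = (\<Sum>j<N. a i * a j * (\<integral>\<omega>. X i \<omega> * Y j \<omega> \<partial>M))"
        if "i < N" for i
        using I that by (subst Bochner_Integration.integral_sum) auto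
      then show ?thesis using I2
        by (subst Bochner_Integration.integral_sum) auto
    qed
    also have "\<dots> = (\<Sum>i<N. \<Sum>j<N. if j = i then (a i)\<^sup>2 * g i else 0)"
      using XY XY0 by (intro sum.cong refl) (auto simp: power2_eq_square)
    also have "\<dots> = (\<Sum>i<N. (a i)\<^sup>2 * g i)" by simp
    finally show ?thesis .
  qed
  obtain i0 where i0: "i0 < N" "a i0 \<noteq> 0" using assms(3) by auto
  have cH: "0 < 2 * H i" "2 * H i < 2" if "i < N" for i using assms(2) that by auto
  show "((\<forall>i<N. H i = 1/2) \<longrightarrow> cov M (\<lambda>\<omega>. S v \<omega> - S u \<omega>) (\<lambda>\<omega>. S t \<omega> - S s \<omega>) = 0) \<and>
     ((\<forall>i<N. H i > 1/2) \<longrightarrow> cov M (\<lambda>\<omega>. S v \<omega> - S u \<omega>) (\<lambda>\<omega>. S t \<omega> - S s \<omega>) > 0) \<and>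
     ((\<forall>i<N. H i < 1/2) \<longrightarrow> cov M (\<lambda>\<omega>. S v \<omega> - S u \<omega>) (\<lambda>\<omega>. S t \<omega> - S s \<omega>) < 0)"
    unfolding covS
  proof (intro conjI impI)
    assume h: "\<forall>i<N. H i = 1/2"
    show "(\<Sum>i<N. (a i)\<^sup>2 * g i) = 0"
    proof (intro sum.neutral ballI)
      fix i assume "i \<in> {..<N}"
      hence "2 * H i = 1" using h by auto
      thus "(a i)\<^sup>2 * g i = 0" using GG_one[OF o1] by (simp add: g_def)
    qed
  next
    assume h: "\<forall>i<N. H i > 1/2"
    have gp: "g i > 0" if "i < N" for i
    proof -
      have hi: "1 < 2 * H i" using h that by auto
      have "(2 * H i - 1) * (GG (2 * H i) s t u - GG (2 * H i) s t v) > 0"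
        using key_ineq[of "2 * H i", OF cH(1)[OF that] _ cH(2)[OF that] o1] hi by simp
      thus ?thesis using hi unfolding g_def by (simp add: zero_less_mult_iff)
    qed
    show "(\<Sum>i<N. (a i)\<^sup>2 * g i) > 0"
    proof (rule sum_pos2[of _ i0])
      show "0 < (a i0)\<^sup>2 * g i0" using i0 gp by simp
      show "0 \<le> (a i)\<^sup>2 * g i" if "i \<in> {..<N}" for i
        using gp[of i] that by (simp add: less_imp_le)
    qed (use i0 in auto)
  next
    assume h: "\<forall>i<N. H i < 1/2"
    have gp: "g i < 0" if "i < N" for i
    proof -
      have hi: "2 * H i < 1" using h that by auto
      have "(2 * H i - 1) * (GG (2 * H i) s t u - GG (2 * H i) s t v) > 0"
        using key_ineq[of "2 * H i", OF cH(1)[OF that] _ cH(2)[OF that] o1] hi by simp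
      thus ?thesis using hi unfolding g_def by (simp add: zero_less_mult_iff)
    qed
    have "(\<Sum>i<N. - ((a i)\<^sup>2 * g i)) > 0"
    proof (rule sum_pos2[of _ i0])
      show "0 < - ((a i0)\<^sup>2 * g i0)" using i0 gp[of i0] by (simp add: mult_pos_neg)
      show "0 \<le> - ((a i)\<^sup>2 * g i)" if "i \<in> {..<N}" for i
        using gp[of i] that by (simp add: mult_nonneg_nonpos)
    qed (use i0 in auto)
    then show "(\<Sum>i<N. (a i)\<^sup>2 * g i) < 0" by (simp add: sum_negf)
  qed
qed


end
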